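(* Let $n\ge 1$, let $N=2^{n+1}+1$, and let $a$ be an integer; put $x=2^n+a+1$, all vertex indices being taken modulo $N$. Let $D$ be the symmetric cycle of order $N$ on vertices $v_0,v_1,\dots,v_{N-1}$ (i.e. with the arcs $v_iv_{i+1}$ and $v_{i+1}v_i$ for all $i$) together with the two asymmetric arcs $v_0v_{2^n}$ and $v_xv_a$. Let $D'$ be a disjoint copy of $D$, where $v'_i\in V(D')$ is the copy of $v_i\in V(D)$. Then the cyclic Haj\'os identification $H=(D,v_x,v_a)\otimes(D',v'_0,v'_{2^n})$ is the symmetric cycle of order $N$ on $v_0,\dots,v_{N-1}$ together with the two asymmetric arcs $v_0v_{2^n}$ and $v_{2^n+2a+1}v_{2a}$.
   Context: Digraphs are finite, without loops or multiple arcs. An arc $uv$ is symmetric if $vu$ is also an arc, and asymmetric otherwise. For a digraph $D$ and a nonempty independent set $I$ of vertices, identifying $I$ means: delete $I$, add a new vertex $v$ (which may keep the label of one vertex of $I$), and add all arcs from $v$ to $\bigcup_{u\in I}N^+(u)$ and from $\bigcup_{u\in I}N^-(u)$ to $v$. The directed Haj\'os join $(D_1,u_1,v_1)\triangledown(D_2,v_2,u_2)$ of disjoint digraphs $D_1,D_2$ with $u_1v_1\in A(D_1)$, $v_2u_2\in A(D_2)$ is obtained from the disjoint union by deleting the arcs $u_1v_1$ and $v_2u_2$, identifying $v_1$ and $v_2$ into one vertex, and adding the arc $u_1u_2$. Cyclic Haj\'os identification: let $D,D'$ be disjoint digraphs of the same order $N$ with vertex sets $\{v_0,\dots,v_{N-1}\}$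 and $\{v'_0,\dots,v'_{N-1}\}$, and let $v_iv_j\in A(D)$, $v'_kv'_l\in A(D')$ with $i\ne j$, $k\ne l$ and $j-i\ne k-l$. Then $(D,v_i,v_j)\otimes(D',v'_k,v'_l)$ is the digraph obtained from the directed Haj\'os join $(D,v_i,v_j)\triangledown(D',v'_k,v'_l)$ (where $v_j$ and $v'_k$ are identified into $v_j$) by performing, for $r=1,\dots,N-1$, the identification of $v'_{k+r}$ and $v_{j+r}$ into the vertex $v_{j+r}$, indices taken modulo $N$. *)

theory Defs
  imports Main
begin

type_synonym 'a digraph = "'a set \<times> ('a \<times> 'a) set"

text \<open>Identification of a nonempty independent set I into a new vertex w
  (w is either one of the vertices of I, keeping its label, or a fresh vertex).
  Undefined (None) if the preconditions fail.\<close>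
definition identify :: "'a set \<Rightarrow> 'a \<Rightarrow> 'a digraph \<Rightarrow> 'a digraph option" where
  "identify I w G =
    (if I \<noteq> {} \<and> I \<subseteq> fst G \<and> (\<forall>p\<in>I. \<forall>q\<in>I. (p, q) \<notin> snd G)
        \<and> (w \<in> I \<or> w \<notin> fst G)
     then Some ((fst G - I) \<union> {w},
                {(p, q) \<in> snd G. p \<notin> I \<and> q \<notin> I}
                \<union> {(w, q) | u q. u \<in> I \<and> (u, q) \<in> snd G}
                \<union> {(p, w) | p u. u \<in> I \<and> (p, u) \<in> snd G})
     else None)"

text \<open>Directed Hajos join (D1,u1,v1) join (D2,v2,u2); v1 and v2 are identified into v1.\<close>
definition hajos_join ::
  "'a digraph \<Rightarrow> 'a \<Rightarrow> 'a \<Rightarrow> 'a digraph \<Rightarrow> 'a \<Rightarrow> 'a \<Rightarrow> 'a digraph option" where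
  "hajos_join D1 u1 v1 D2 v2 u2 =
    (if fst D1 \<inter> fst D2 = {} \<and> (u1, v1) \<in> snd D1 \<and> (v2, u2) \<in> snd D2
     then map_option (\<lambda>G. (fst G, snd G \<union> {(u1, u2)}))
            (identify {v1, v2} v1
               (fst D1 \<union> fst D2, (snd D1 - {(u1, v1)}) \<union> (snd D2 - {(v2, u2)})))
     else None)"

text \<open>Cyclic Hajos identification (D,v_i,v_j) (x) (D',v'_k,v'_l), where
  v, v' enumerate the vertices of D, D' (indices taken modulo N).\<close>
definition cyclic_hajos ::
  "int \<Rightarrow> (int \<Rightarrow> 'a) \<Rightarrow> 'a digraph \<Rightarrow> int \<Rightarrow> int \<Rightarrow>
          (int \<Rightarrow> 'a) \<Rightarrow> 'a digraph \<Rightarrow> int \<Rightarrow> int \<Rightarrow> 'a digraph option" where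
  "cyclic_hajos N v D i j v' D' k l =
    (if N \<ge> 1 \<and> bij_betw v {0..<N} (fst D) \<and> bij_betw v' {0..<N} (fst D')
        \<and> i mod N \<noteq> j mod N \<and> k mod N \<noteq> l mod N \<and> (j - i) mod N \<noteq> (k - l) mod N
     then fold (\<lambda>r G. Option.bind G
                  (identify {v' ((k + r) mod N), v ((j + r) mod N)} (v ((j + r) mod N))))
            [1..N - 1]
            (hajos_join D (v (i mod N)) (v (j mod N)) D' (v' (k mod N)) (v' (l mod N)))
     else None)"

definition sym_cycle :: "int \<Rightarrow> (int \<Rightarrow> 'a) \<Rightarrow> ('a \<times> 'a) set" where
  "sym_cycle N v =
     {(v i, v ((i + 1) mod N)) | i. 0 \<le> i \<and> i < N}
   \<union> {(v ((i + 1) mod N), v i) | i. 0 \<le> i \<and> i < N}"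

definition cycle_plus_two :: "int \<Rightarrow> (int \<Rightarrow> 'a) \<Rightarrow> int \<Rightarrow> int \<Rightarrow> int \<Rightarrow> int \<Rightarrow> 'a digraph" where
  "cycle_plus_two N v p q s t =
     (v ` {0..<N}, sym_cycle N v \<union> {(v (p mod N), v (q mod N)), (v (s mod N), v (t mod N))})"

end

theory Submission
  imports Defs
begin

definition amap :: "('a \<Rightarrow> 'b) \<Rightarrow> ('a \<times> 'a) set \<Rightarrow> ('b \<times> 'b) set" where
  "amap f A = (\<lambda>(p, q). (f p, f q)) ` A"

lemma identify_simple:
  assumes "I \<noteq> {}" "I \<subseteq> V" "w \<in> I" "\<forall>p\<in>I. \<forall>q\<in>I. (p, q) \<notin> A"
  shows "identify I w (V, A) = Some ((\<lambda>z. if z \<in> I then w else z) ` V,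
                                    amap (\<lambda>z. if z \<in> I then w else z) A)"
proof -
  have v: "(V - I) \<union> {w} = (\<lambda>z. if z \<in> I then w else z) ` V"
    using assms(2,3) by (auto simp: image_iff)
  have a: "{(p, q) \<in> A. p \<notin> I \<and> q \<notin> I}
                \<union> {(w, q) | u q. u \<in> I \<and> (u, q) \<in> A}
                \<union> {(p, w) | p u. u \<in> I \<and> (p, u) \<in> A} = amap (\<lambda>z. if z \<in> I then w else z) A"
  proof (intro equalityI subsetI)
    fix e assume "e \<in> {(p, q) \<in> A. p \<notin> I \<and> q \<notin> I}
                \<union> {(w, q) | u q. u \<in> I \<and> (u, q) \<in> A}
                \<union> {(p, w) | p u. u \<in> I \<and> (p, u) \<in> A}"
    then show "e \<in> amap (\<lambda>z. if z \<in> I then w else z) A"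
    proof (elim UnE)
      assume "e \<in> {(p, q) \<in> A. p \<notin> I \<and> q \<notin> I}"
      then obtain p q where "e = (p, q)" "(p, q) \<in> A" "p \<notin> I" "q \<notin> I" by blast
      then show ?thesis unfolding amap_def by (auto intro!: image_eqI[of _ _ "(p,q)"])
    next
      assume "e \<in> {(w, q) | u q. u \<in> I \<and> (u, q) \<in> A}"
      then obtain u q where "e = (w, q)" "(u, q) \<in> A" "u \<in> I" by blast
      moreover have "q \<notin> I" using assms(4) calculation by blast
      ultimately show ?thesis unfolding amap_def by (auto intro!: image_eqI[of _ _ "(u,q)"])
    next
      assume "e \<in> {(p, w) | p u. u \<in> I \<and> (p, u) \<in> A}"
      then obtain u p where "e = (p, w)" "(p, u) \<in> A" "u \<in> I" by blast
      moreover have "p \<notin> I" using assms(4) calculation by blast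
      ultimately show ?thesis unfolding amap_def by (auto intro!: image_eqI[of _ _ "(p,u)"])
    qed
  next
    fix e assume "e \<in> amap (\<lambda>z. if z \<in> I then w else z) A"
    then obtain p q where e: "e = (if p \<in> I then w else p, if q \<in> I then w else q)" "(p, q) \<in> A"
      unfolding amap_def by auto
    show "e \<in> {(p, q) \<in> A. p \<notin> I \<and> q \<notin> I}
                \<union> {(w, q) | u q. u \<in> I \<and> (u, q) \<in> A}
                \<union> {(p, w) | p u. u \<in> I \<and> (p, u) \<in> A}"
      using e assms(4) by (cases "p \<in> I"; cases "q \<in> I") auto
  qed
  show ?thesis using assms v a unfolding identify_def by auto
qed

lemma identify_img:
  assumes "I \<noteq> {}" "I \<subseteq> f ` V" "w \<in> I" "\<forall>p\<in>I. \<forall>q\<in>I. (p, q) \<notin> amap f A"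
    and "\<And>z. (if f z \<in> I then w else f z) = h z"
  shows "identify I w (f ` V, amap f A) = Some (h ` V, amap h A)"
proof -
  have "identify I w (f ` V, amap f A) = Some ((\<lambda>z. if z \<in> I then w else z) ` f ` V,
                                    amap (\<lambda>z. if z \<in> I then w else z) (amap f A))"
    by (rule identify_simple[OF assms(1-4)])
  also have "\<dots> = Some (h ` V, amap h A)"
  proof -
    define g where "g = (\<lambda>z. if z \<in> I then w else z)"
    have h: "h = g \<circ> f" using assms(5) by (auto simp: fun_eq_iff g_def)
    have "g ` f ` V = h ` V" unfolding h by (simp add: image_comp)
    moreover have "amap g (amap f A) = amap h A" unfolding h amap_def image_comp
      by (simp add: o_def case_prod_unfold)
    ultimately show ?thesis unfolding g_def by simp
  qed
  finally show ?thesis .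
qed

definition phi :: "int \<Rightarrow> int \<Rightarrow> int \<Rightarrow> int + int \<Rightarrow> int + int" where
  "phi N a r z = (case z of Inl s \<Rightarrow> Inl s
      | Inr s \<Rightarrow> if 0 \<le> s \<and> s \<le> r then Inl ((a + s) mod N) else Inr s)"

definition Phi :: "int \<Rightarrow> int \<Rightarrow> int + int \<Rightarrow> int + int" where
  "Phi N a z = (case z of Inl s \<Rightarrow> Inl s | Inr s \<Rightarrow> Inl ((a + s) mod N))"

lemma Phi_I:
  assumes "1 \<le> r" "phi N a (r - 1) z \<in> {Inr r, Inl ((a + r) mod N)}"
  shows "Phi N a z = Inl ((a + r) mod N)"
  using assms by (cases z) (auto simp: phi_def Phi_def split: if_splits)

lemma phi_step:
  assumes "1 \<le> r"
  shows "(if phi N a (r - 1) z \<in> {Inr r, Inl ((a + r) mod N)} then Inl ((a + r) mod N)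
          else phi N a (r - 1) z) = phi N a r z"
  using assms by (cases z) (auto simp: phi_def split: if_splits)

lemma fold_steps:
  fixes N a :: int and V :: "(int + int) set" and A
  assumes N: "N \<ge> 1"
    and V: "Inl ` {0..<N} \<subseteq> V" "Inr ` {0..<N} \<subseteq> V"
    and lf: "\<forall>(p, q) \<in> A. Phi N a p \<noteq> Phi N a q"
  shows "0 \<le> r \<Longrightarrow> r \<le> N - 1 \<Longrightarrow>
    fold (\<lambda>r G. Option.bind G (identify {Inr ((0 + r) mod N), Inl ((a + r) mod N)} (Inl ((a + r) mod N))))
      [1..r] (Some (phi N a 0 ` V, amap (phi N a 0) A))
    = Some (phi N a r ` V, amap (phi N a r) A)"
proof (induction r rule: int_ge_induct)
  case base
  then show ?case by simp
next
  case (step r)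
  have r1: "1 \<le> r + 1" using step by simp
  have rr: "(0 + (r + 1)) mod N = r + 1" using step by simp
  have e: "[1..r + 1] = [1..r] @ [r + 1]" using upto_rec2[of 1 "r+1"] r1 by simp
  have IH: "fold (\<lambda>r G. Option.bind G (identify {Inr ((0 + r) mod N), Inl ((a + r) mod N)} (Inl ((a + r) mod N))))
      [1..r] (Some (phi N a 0 ` V, amap (phi N a 0) A))
    = Some (phi N a r ` V, amap (phi N a r) A)" using step by simp
  have id: "identify {Inr (r + 1), Inl ((a + (r + 1)) mod N)} (Inl ((a + (r + 1)) mod N))
      (phi N a (r + 1 - 1) ` V, amap (phi N a (r + 1 - 1)) A) = Some (phi N a (r + 1) ` V, amap (phi N a (r + 1)) A)"
  proof (rule identify_img)
    show "{Inr (r + 1), Inl ((a + (r + 1)) mod N)} \<subseteq> phi N a (r + 1 - 1) ` V"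
    proof -
      have "Inr (r + 1) = phi N a (r + 1 - 1) (Inr (r + 1))" by (simp add: phi_def)
      moreover have "Inr (r + 1) \<in> V" using V step by auto
      moreover have "Inl ((a + (r + 1)) mod N) = phi N a (r + 1 - 1) (Inl ((a + (r + 1)) mod N))"
        by (simp add: phi_def)
      moreover have "Inl ((a + (r + 1)) mod N) \<in> V" using V N by auto
      ultimately show ?thesis by blast
    qed
    show "\<forall>p\<in>{Inr (r + 1), Inl ((a + (r + 1)) mod N)}. \<forall>q\<in>{Inr (r + 1), Inl ((a + (r + 1)) mod N)}.
        (p, q) \<notin> amap (phi N a (r + 1 - 1)) A"
    proof (intro ballI notI)
      fix p q assume p: "p \<in> {Inr (r + 1), Inl ((a + (r + 1)) mod N)}"
        and q: "q \<in> {Inr (r + 1), Inl ((a + (r + 1)) mod N)}"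
        and pq: "(p, q) \<in> amap (phi N a (r + 1 - 1)) A"
      then obtain p0 q0 where "(p0, q0) \<in> A" "p = phi N a (r + 1 - 1) p0" "q = phi N a (r + 1 - 1) q0"
        unfolding amap_def by auto
      with p q have "Phi N a p0 = Phi N a q0" using Phi_I[OF r1] by metis
      with lf \<open>(p0, q0) \<in> A\<close> show False by auto
    qed
    fix z show "(if phi N a (r + 1 - 1) z \<in> {Inr (r + 1), Inl ((a + (r + 1)) mod N)} then Inl ((a + (r + 1)) mod N)
          else phi N a (r + 1 - 1) z) = phi N a (r + 1) z" by (rule phi_step[OF r1])
  qed auto
  show ?case unfolding e using IH id rr by simp
qed

lemma modne:
  fixes u v N :: int
  assumes "u mod N = v mod N" "0 < \<bar>u - v\<bar>" "\<bar>u - v\<bar> < N"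
  shows False
proof -
  have "N dvd (u - v)" using assms(1) by (simp add: mod_eq_dvd_iff)
  then have "\<bar>N\<bar> \<le> \<bar>u - v\<bar>" using assms(2) by (simp add: dvd_imp_le_int)
  then show False using assms(3) by simp
qed

lemma phi_Inl[simp]: "phi N a r (Inl s) = Inl s" by (simp add: phi_def)
lemma Phi_Inl[simp]: "Phi N a (Inl s) = Inl s" by (simp add: Phi_def)
lemma Phi_Inr[simp]: "Phi N a (Inr s) = Inl ((a + s) mod N)" by (simp add: Phi_def)
lemma phi_last: "0 \<le> s \<Longrightarrow> s < N \<Longrightarrow> phi N a (N - 1) (Inr s) = Inl ((a + s) mod N)"
  by (simp add: phi_def)

lemma sym_cycle_Inl_lf:
  fixes N :: int
  assumes "N \<ge> 2" "(p, q) \<in> sym_cycle N Inl"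
  shows "p \<noteq> q"
proof
  assume pq: "p = q"
  from assms(2) obtain i where i: "0 \<le> i" "i < N" "(p, q) = (Inl i, Inl ((i + 1) mod N)) \<or> (p, q) = (Inl ((i + 1) mod N), Inl i)"
    unfolding sym_cycle_def by blast
  then have "i mod N = (i + 1) mod N" using pq by auto
  then show False using modne[of i N "i + 1"] assms(1) by simp
qed

lemma main:
  fixes N m a :: int
  assumes N: "N = 2 * m + 1" and m: "m \<ge> 2" and am: "a mod N \<noteq> m"
  shows "cyclic_hajos N Inl (cycle_plus_two N Inl 0 m (m + a + 1) a) (m + a + 1) a
           Inr (cycle_plus_two N Inr 0 m (m + a + 1) a) 0 m
         = Some (cycle_plus_two N Inl 0 m (m + 2 * a + 1) (2 * a))"
proof -
  have N5: "N \<ge> 5" using N m by simp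
  have mm: "m mod N = m" using N m by simp
  define x' where "x' = (m + a + 1) mod N"
  define a' where "a' = a mod N"
  define V :: "(int + int) set" where "V = Inl ` {0..<N} \<union> Inr ` {0..<N}"
  define AD :: "((int + int) \<times> (int + int)) set" where
    "AD = sym_cycle N Inl \<union> {(Inl 0, Inl m), (Inl x', Inl a')}"
  define AD' :: "((int + int) \<times> (int + int)) set" where
    "AD' = sym_cycle N Inr \<union> {(Inr 0, Inr m), (Inr x', Inr a')}"
  define A1 where "A1 = (AD - {(Inl x', Inl a')}) \<union> (AD' - {(Inr 0, Inr m)})"
  define Apre where "Apre = A1 \<union> {(Inl x', Inr m)}"
  have D: "cycle_plus_two N Inl 0 m (m + a + 1) a = (Inl ` {0..<N}, AD)"
    unfolding cycle_plus_two_def AD_def x'_def a'_def mm by simp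
  have D': "cycle_plus_two N Inr 0 m (m + a + 1) a = (Inr ` {0..<N}, AD')"
    unfolding cycle_plus_two_def AD'_def x'_def a'_def mm by simp
  have c1: "(m + a + 1) mod N \<noteq> a mod N"
    using modne[of "m + a + 1" N a] N m by auto
  have c3: "(a - (m + a + 1)) mod N \<noteq> (0 - m) mod N"
    using modne[of "a - (m + a + 1)" N "0 - m"] N m by auto
  have bl: "bij_betw Inl {0..<N} (Inl ` {0..<N})" by (simp add: bij_betw_def)
  have br: "bij_betw Inr {0..<N} (Inr ` {0..<N})" by (simp add: bij_betw_def)
  have m0: "m \<noteq> 0" "0 < m" using m by auto
  have Nm: "m < N" "m + 1 < N" "m + 2 < N" using N m by auto
  have x'r: "0 \<le> x'" "x' < N" unfolding x'_def using N5 by auto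
  have a'r: "0 \<le> a'" "a' < N" unfolding a'_def using N5 by auto
  have a'm: "a' \<noteq> m" using am a'_def by simp
  have mods: "\<And>u v. ((u + v) mod N + 1) mod N = (u + (v + 1) mod N) mod N"
    by (simp add: mod_simps ac_simps)
  have lf: "\<forall>(p, q) \<in> Apre. Phi N a p \<noteq> Phi N a q"
  proof (clarify)
    fix p q assume pq: "(p, q) \<in> Apre" and eq: "Phi N a p = Phi N a q"
    have "(p, q) \<in> sym_cycle N Inl \<or> (p, q) \<in> sym_cycle N Inr \<or> (p, q) = (Inl 0, Inl m) \<or>
      (p, q) = (Inl x', Inl a') \<or> (p, q) = (Inr 0, Inr m) \<or> (p, q) = (Inr x', Inr a') \<or>
      (p, q) = (Inl x', Inr m)"
      using pq unfolding Apre_def A1_def AD_def AD'_def by blast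
    then show False
    proof (elim disjE)
      assume "(p, q) \<in> sym_cycle N Inl"
      then obtain i where i: "0 \<le> i" "i < N" "(p, q) = (Inl i, Inl ((i + 1) mod N)) \<or> (p, q) = (Inl ((i + 1) mod N), Inl i)"
        unfolding sym_cycle_def by blast
      then have "i mod N = (i + 1) mod N" using eq by auto
      then show False using modne[of i N "i + 1"] N5 by simp
    next
      assume "(p, q) \<in> sym_cycle N Inr"
      then obtain i where i: "0 \<le> i" "i < N" "(p, q) = (Inr i, Inr ((i + 1) mod N)) \<or> (p, q) = (Inr ((i + 1) mod N), Inr i)"
        unfolding sym_cycle_def by blast
      then have "(a + i) mod N = (a + (i + 1) mod N) mod N" using eq by auto
      then have "(a + i) mod N = (a + i + 1) mod N" by (simp add: mod_simps ac_simps)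
      then show False using modne[of "a + i" N "a + i + 1"] N5 by simp
    next
      assume "(p, q) = (Inl 0, Inl m)" then show False using eq m0 by simp
    next
      assume "(p, q) = (Inl x', Inl a')" then show False using eq c1 x'_def a'_def by simp
    next
      assume "(p, q) = (Inr 0, Inr m)"
      then have "(a + 0) mod N = (a + m) mod N" using eq by simp
      then show False using modne[of "a + 0" N "a + m"] m0 Nm by simp
    next
      assume "(p, q) = (Inr x', Inr a')"
      then have "(a + x') mod N = (a + a') mod N" using eq by simp
      then have "(a + m + a + 1) mod N = (a + a) mod N" unfolding x'_def a'_def by (simp add: mod_simps ac_simps)
      then show False using modne[of "a + m + a + 1" N "a + a"] m0 Nm by simp
    next
      assume "(p, q) = (Inl x', Inr m)"
      then have "(m + a + 1) mod N = (a + m) mod N" using eq x'_def by simp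
      then show False using modne[of "m + a + 1" N "a + m"] N5 by simp
    qed
  qed
  have hj: "hajos_join (Inl ` {0..<N}, AD) (Inl x') (Inl a') (Inr ` {0..<N}, AD') (Inr 0) (Inr m)
     = Some (phi N a 0 ` V, amap (phi N a 0) Apre)"
  proof -
    define I :: "(int + int) set" where "I = {Inl a', Inr 0}"
    have c: "fst (Inl ` {0..<N}, AD) \<inter> fst (Inr ` {0..<N}, AD') = {} \<and> (Inl x', Inl a') \<in> snd (Inl ` {0..<N}, AD)
       \<and> (Inr 0, Inr m) \<in> snd (Inr ` {0..<N}, AD')" unfolding AD_def AD'_def by auto
    have u: "(fst (Inl ` {0..<N}, AD) \<union> fst (Inr ` {0..<N}, AD'),
       (snd (Inl ` {0..<N}, AD) - {(Inl x', Inl a')}) \<union> (snd (Inr ` {0..<N}, AD') - {(Inr 0, Inr m)})) = (V, A1)"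
      unfolding V_def A1_def by simp
    have ind: "\<forall>p\<in>I. \<forall>q\<in>I. (p, q) \<notin> A1"
    proof (intro ballI notI)
      fix p q assume "p \<in> I" "q \<in> I" "(p, q) \<in> A1"
      moreover have "\<And>z. z \<in> I \<Longrightarrow> Phi N a z = Inl a'" unfolding I_def a'_def by auto
      ultimately show False using lf unfolding Apre_def by fastforce
    qed
    have iI: "identify I (Inl a') (V, A1) = Some ((\<lambda>z. if z \<in> I then Inl a' else z) ` V,
                                    amap (\<lambda>z. if z \<in> I then Inl a' else z) A1)"
      by (rule identify_simple) (use ind a'r in \<open>auto simp: I_def V_def\<close>)
    have g: "(\<lambda>z. if z \<in> I then Inl a' else z) = phi N a 0"
    proof
      fix z show "(if z \<in> I then Inl a' else z) = phi N a 0 z"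
        by (cases z) (auto simp: I_def phi_def a'_def)
    qed
    have ap: "amap (phi N a 0) Apre = amap (phi N a 0) A1 \<union> {(Inl x', Inr m)}"
      unfolding Apre_def amap_def using m0 by (simp add: phi_def)
    have iI': "identify I (Inl a') (V, A1) = Some (phi N a 0 ` V, amap (phi N a 0) A1)"
      using iI unfolding g .
    show ?thesis unfolding hajos_join_def if_P[OF c] u I_def[symmetric] iI' ap by simp
  qed
  have fo: "fold (\<lambda>r G. Option.bind G (identify {Inr ((0 + r) mod N), Inl ((a + r) mod N)} (Inl ((a + r) mod N))))
      [1..N - 1] (Some (phi N a 0 ` V, amap (phi N a 0) Apre))
    = Some (phi N a (N - 1) ` V, amap (phi N a (N - 1)) Apre)"
    by (rule fold_steps) (use N5 lf in \<open>auto simp: V_def\<close>)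
  have fv: "phi N a (N - 1) ` V = Inl ` {0..<N}"
    unfolding V_def image_Un using N5 by (auto simp: phi_def image_iff)
  have fa: "amap (phi N a (N - 1)) Apre = sym_cycle N Inl \<union>
     {(Inl 0, Inl m), (Inl ((m + 2 * a + 1) mod N), Inl ((2 * a) mod N))}"
     (is "_ = ?R")
  proof (intro equalityI subsetI)
    fix e assume "e \<in> amap (phi N a (N - 1)) Apre"
    then obtain p q where pq: "(p, q) \<in> Apre" and e: "e = (phi N a (N - 1) p, phi N a (N - 1) q)"
      unfolding amap_def by auto
    have "(p, q) \<in> sym_cycle N Inl \<or> (p, q) \<in> sym_cycle N Inr \<or> (p, q) = (Inl 0, Inl m) \<or>
      (p, q) = (Inr x', Inr a') \<or> (p, q) = (Inl x', Inr m)"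
      using pq unfolding Apre_def A1_def AD_def AD'_def by blast
    then show "e \<in> ?R"
    proof (elim disjE)
      assume "(p, q) \<in> sym_cycle N Inl" then show ?thesis using e
        unfolding sym_cycle_def by auto
    next
      assume "(p, q) \<in> sym_cycle N Inr"
      then obtain i where i: "0 \<le> i" "i < N" "(p, q) = (Inr i, Inr ((i + 1) mod N)) \<or> (p, q) = (Inr ((i + 1) mod N), Inr i)"
        unfolding sym_cycle_def by blast
      have i1: "0 \<le> (i + 1) mod N" "(i + 1) mod N < N" using N5 by auto
      have j: "0 \<le> (a + i) mod N" "(a + i) mod N < N" using N5 by auto
      have "e = (Inl ((a + i) mod N), Inl (((a + i) mod N + 1) mod N)) \<or>
            e = (Inl (((a + i) mod N + 1) mod N), Inl ((a + i) mod N))"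
        using i i1 e mods[of a i] by (auto simp: phi_last)
      then have "e \<in> sym_cycle N Inl" unfolding sym_cycle_def using j by blast
      then show ?thesis by simp
    next
      assume "(p, q) = (Inl 0, Inl m)" then show ?thesis using e by simp
    next
      assume "(p, q) = (Inr x', Inr a')"
      then have "e = (Inl ((a + x') mod N), Inl ((a + a') mod N))" using e x'r a'r by (simp add: phi_last)
      also have "\<dots> = (Inl ((m + 2 * a + 1) mod N), Inl ((2 * a) mod N))"
        unfolding x'_def a'_def by (simp add: mod_simps ac_simps mult_2)
      finally show ?thesis by simp
    next
      assume "(p, q) = (Inl x', Inr m)"
      then have e2: "e = (Inl x', Inl ((a + m) mod N))" using e m0 Nm by (simp add: phi_last)
      have "x' = ((a + m) mod N + 1) mod N" unfolding x'_def by (simp add: mod_simps ac_simps)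
      then have "e = (Inl (((a + m) mod N + 1) mod N), Inl ((a + m) mod N))" using e2 by simp
      moreover have "0 \<le> (a + m) mod N" "(a + m) mod N < N" using N5 by auto
      ultimately have "e \<in> sym_cycle N Inl" unfolding sym_cycle_def by blast
      then show ?thesis by simp
    qed
  next
    fix e assume "e \<in> ?R"
    then consider "e \<in> sym_cycle N Inl" | "e = (Inl 0, Inl m)"
      | "e = (Inl ((m + 2 * a + 1) mod N), Inl ((2 * a) mod N))" by blast
    then show "e \<in> amap (phi N a (N - 1)) Apre"
    proof cases
      case 1
      have ne: "e \<noteq> (Inl x', Inl a')"
      proof
        assume ee: "e = (Inl x', Inl a')"
        from 1 obtain i where i: "0 \<le> i" "i < N" "e = (Inl i, Inl ((i + 1) mod N)) \<or> e = (Inl ((i + 1) mod N), Inl i)"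
          unfolding sym_cycle_def by blast
        then consider "i = x'" "a' = (i + 1) mod N" | "i = a'" "x' = (i + 1) mod N" using ee by auto
        then show False
        proof cases
          case 1
          then have "(m + a + 2) mod N = a mod N" unfolding x'_def a'_def by (simp add: mod_simps ac_simps)
          then show False using modne[of "m + a + 2" N a] m0 Nm by simp
        next
          case 2
          then have "(m + a + 1) mod N = (a + 1) mod N" unfolding x'_def a'_def by (simp add: mod_simps ac_simps)
          then show False using modne[of "m + a + 1" N "a + 1"] m0 Nm by simp
        qed
      qed
      have "e \<in> Apre" using 1 ne unfolding Apre_def A1_def AD_def by blast
      moreover obtain u v where "e = (Inl u, Inl v)" using 1 unfolding sym_cycle_def by blast
      ultimately show ?thesis unfolding amap_def by (auto intro!: image_eqI[of _ _ e])
    next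
      case 2
      have "e \<in> Apre" using 2 a'm unfolding Apre_def A1_def AD_def by auto
      then show ?thesis unfolding amap_def using 2 by (auto intro!: image_eqI[of _ _ e])
    next
      case 3
      have "(Inr x', Inr a') \<in> Apre" using a'm unfolding Apre_def A1_def AD'_def by auto
      moreover have "e = (phi N a (N - 1) (Inr x'), phi N a (N - 1) (Inr a'))"
      proof -
        have "(phi N a (N - 1) (Inr x'), phi N a (N - 1) (Inr a')) = (Inl ((a + x') mod N), Inl ((a + a') mod N))"
          using x'r a'r by (simp add: phi_last)
        also have "\<dots> = (Inl ((m + 2 * a + 1) mod N), Inl ((2 * a) mod N))"
          unfolding x'_def a'_def by (simp add: mod_simps ac_simps mult_2)
        finally show ?thesis using 3 by simp
      qed
      ultimately show ?thesis unfolding amap_def by (auto intro!: image_eqI[of _ _ "(Inr x', Inr a')"])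
    qed
  qed
  have "cyclic_hajos N Inl (cycle_plus_two N Inl 0 m (m + a + 1) a) (m + a + 1) a
           Inr (cycle_plus_two N Inr 0 m (m + a + 1) a) 0 m
     = fold (\<lambda>r G. Option.bind G (identify {Inr ((0 + r) mod N), Inl ((a + r) mod N)} (Inl ((a + r) mod N))))
      [1..N - 1] (hajos_join (Inl ` {0..<N}, AD) (Inl x') (Inl a') (Inr ` {0..<N}, AD') (Inr 0) (Inr m))"
    unfolding cyclic_hajos_def D D' fst_conv
  proof (subst if_P)
    show "1 \<le> N \<and> bij_betw Inl {0..<N} (Inl ` {0..<N}) \<and> bij_betw Inr {0..<N} (Inr ` {0..<N}) \<and>
        (m + a + 1) mod N \<noteq> a mod N \<and> 0 mod N \<noteq> m mod N \<and> (a - (m + a + 1)) mod N \<noteq> (0 - m) mod N"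
      using N5 c1 c3 bl br mm m by simp
  qed (simp add: x'_def a'_def mm)
  also have "\<dots> = Some (cycle_plus_two N Inl 0 m (m + 2 * a + 1) (2 * a))"
    unfolding hj fo fv fa cycle_plus_two_def mm by simp
  finally show ?thesis .
qed

theorem lemma1:
  fixes n :: nat and a :: int
  assumes "n \<ge> 1"
    and "a mod (2 ^ (n + 1) + 1) \<noteq> 2 ^ n"
  shows "cyclic_hajos (2 ^ (n + 1) + 1)
           (Inl :: int \<Rightarrow> int + int) (cycle_plus_two (2 ^ (n + 1) + 1) Inl 0 (2 ^ n) (2 ^ n + a + 1) a)
           (2 ^ n + a + 1) a
           Inr (cycle_plus_two (2 ^ (n + 1) + 1) Inr 0 (2 ^ n) (2 ^ n + a + 1) a)
           0 (2 ^ n)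
         = Some (cycle_plus_two (2 ^ (n + 1) + 1) Inl 0 (2 ^ n) (2 ^ n + 2 * a + 1) (2 * a))"
proof (rule main)
  show "(2::int) ^ (n + 1) + 1 = 2 * 2 ^ n + 1" by simp
  have "(2::int) ^ 1 \<le> 2 ^ n" using assms(1) by (rule power_increasing) simp
  then show "(2::int) \<le> 2 ^ n" by simp
  show "a mod (2 ^ (n + 1) + 1) \<noteq> 2 ^ n" by (rule assms(2))
qed

end
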